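(* Let $k\ge 0$, let $\Omega$ be any collection of functions, and let $\varphi$ be an expression of $\mathsf{TL}(\Omega)$ of treewidth at most $k$ whose free variables are among $x_1,\dots,x_{k+1}$. Then there is an expression $\varphi'\in\mathsf{TL}_{k+1}(\Omega)$ with $\mathrm{free}(\varphi')\subseteq\mathrm{free}(\varphi)$... more precisely with $[\![\varphi']\!]^\nu_G=[\![\varphi]\!]^\nu_G$ for every graph $G$ and every valuation $\nu$.
   Context: Fix integers $n\ge 1$ and $\ell\ge 1$. A graph is a triple $G=(V_G,E_G,\mathrm{col}_G)$ with $V_G=[n]$, $E_G$ a set of unordered pairs of distinct vertices, and $\mathrm{col}_G:V_G\to\mathbb R^\ell$. Tensor language $\mathsf{TL}(\Omega)$: $\Omega$ is a collection of functions $f:\mathbb R^p\to\mathbb R$ ($p\ge1$ depending on $f$). Expressions: $\varphi::=\mathbf 1_{x=y}\mid \mathbf 1_{x\neq y}\mid E(x,y)\mid P_s(x)\mid \varphi\cdot\varphi\mid \varphi+\varphi\mid a\cdot\varphi\mid f(\varphi_1,\dots,\varphi_p)\mid \sum_x\varphi$ ($s\in[\ell]$, $a\in\mathbb R$, $f\in\Omega$), with the usual free variables ($\sum_x$ binds $x$). Semantics for a graph $G$ and valuation $\nu$ into $V_G$: $[\![E(x,y)]\!]^\nu_G=1$ if $\nu(x)\nu(y)\in E_G$ else $0$; $[\![P_s(x)]\!]^\nu_G=\mathrm{col}_G(\nu(x))_s$; $[\![\mathbf 1_{x\,\mathrm{op}\,y}]\!]^\nu_G=1$ if $\nu(x)\,\mathrm{op}\,\nu(y)$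 else $0$; $\cdot,+,a\cdot,f$ act on values; $[\![\sum_x\varphi]\!]^\nu_G=\sum_{v\in V_G}[\![\varphi]\!]^{\nu[x\mapsto v]}_G$. $\mathsf{TL}_{k+1}(\Omega)$ is the set of expressions in which only variables from $\{x_1,\dots,x_{k+1}\}$ occur (free or bound; re-binding allowed). Conjunctive expressions and their treewidth. Allow, besides the atoms above, additional relation symbols $R$ of some arity $r$ (atoms $R(z_1,\dots,z_r)$, interpreted by arbitrary real-valued functions on $V_G^r$). A conjunctive expression is $\psi(\mathbf x)=\sum_{y_1}\cdots\sum_{y_p}\theta$, where $y_1,\dots,y_p$ are distinct variables not among the free variables $\mathbf x=(x_{i_1},\dots,x_{i_f})$, and $\theta$ is a product of atoms of the forms $E(z,z')$, $P_s(z)$, $\mathbf 1_{z=z'}$, $\mathbf 1_{z\ne z'}$, $R(z_1,\dots,z_r)$ with variables from $\mathbf x\cup\{y_1,\dots,y_p\}$. Its hypergraph $\mathcal H_\psi$ has vertex set $\mathbf x\cup\{y_1,\dots,y_p\}$, a multiset of hyperedges containing, for each atom, the set of variables occurring in it, and distinguished vertices $\mathbf x$. An elimination sequence is an ordering $v_1,\dots,v_N$ of the vertices with the $f$ distinguished ones first ($v_1,\dots,v_f$). Let $\mathcal E_N$ be the hyperedge multiset and, for $j=N,N-1,\dots,f+1$: $\partial(v_j)=\{F\in\mathcal E_j:v_j\in F\}$, $U_j=\bigcup_{F\in\partial(v_j)}F$, $\mathcal E_{j-1}=(\mathcal E_j\setminus\partial(v_j))\cup\{U_j\setminus\{v_j\}\}$.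 The induced width of the sequence is $f+\max_{f+1\le i\le N}|U_i\setminus\{v_1,\dots,v_f\}|-1$ (and $f-1$ if $N=f$). The treewidth of $\psi$ is the minimum induced width over its elimination sequences. Treewidth of arbitrary expressions (recursive on nesting of function applications): $\varphi\in\mathsf{TL}(\Omega)$ has treewidth at most $k$ if (a) the expression $\varphi_{\mathrm{nofun}}$, obtained from $\varphi$ by replacing each maximal subexpression of the form $f(\varphi_1,\dots,\varphi_p)$ by an atom $R_f(\mathbf z)$ with a fresh relation symbol, where $\mathbf z$ lists $\mathrm{free}(\varphi_1)\cup\dots\cup\mathrm{free}(\varphi_p)$, is equivalent (same value for all graphs, all interpretations of the fresh symbols and all valuations) to a finite linear combination $\sum_\alpha a_\alpha\psi_\alpha$, $a_\alpha\in\mathbb R$, of conjunctive expressions $\psi_\alpha$ each of treewidth at most $k$; and (b) every $\varphi_i$ occurring as an argument of such a maximal function application has treewidth at most $k$. *)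

theory Defs
  imports Complex_Main "HOL-Library.Multiset"
begin

text \<open>Variables are natural numbers; variable i stands for x_i.
  Vertices of a graph are {1..n}; colour channels are {1..l}.
  A function symbol of Omega is a pair (p, f) with arity p and f acting on
  argument lists of length p.  The constructor Rel r zs is an atom R(z_1,...,z_r)
  for an additional relation symbol r (only used in conjunctive expressions and
  in the nofun transformation; expressions of TL(Omega) contain no Rel).\<close>

datatype 'r expr =
    EqA nat nat
  | NeqA nat nat
  | Edge nat nat
  | Col nat nat            (* Col x s  =  P_s(x) *)
  | Mul "'r expr" "'r expr"
  | Add "'r expr" "'r expr"
  | Scale real "'r expr"
  | App "nat \<times> (real list \<Rightarrow> real)" "'r expr list"
  | Sum nat "'r expr"
  | Rel 'r "nat list"

primrec free :: "'r expr \<Rightarrow> nat set" where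
  "free (EqA x y) = {x, y}"
| "free (NeqA x y) = {x, y}"
| "free (Edge x y) = {x, y}"
| "free (Col x s) = {x}"
| "free (Mul a b) = free a \<union> free b"
| "free (Add a b) = free a \<union> free b"
| "free (Scale c a) = free a"
| "free (App f as) = \<Union> (set (map free as))"
| "free (Sum x a) = free a - {x}"
| "free (Rel r zs) = set zs"

primrec vars :: "'r expr \<Rightarrow> nat set" where
  "vars (EqA x y) = {x, y}"
| "vars (NeqA x y) = {x, y}"
| "vars (Edge x y) = {x, y}"
| "vars (Col x s) = {x}"
| "vars (Mul a b) = vars a \<union> vars b"
| "vars (Add a b) = vars a \<union> vars b"
| "vars (Scale c a) = vars a"
| "vars (App f as) = \<Union> (set (map vars as))"
| "vars (Sum x a) = insert x (vars a)"
| "vars (Rel r zs) = set zs"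

text \<open>A graph on vertex set {1..n}: edge relation E and colouring col
  (col v s is the s-th component of the colour of v).\<close>
type_synonym graph = "(nat \<Rightarrow> nat \<Rightarrow> bool) \<times> (nat \<Rightarrow> nat \<Rightarrow> real)"

definition is_graph :: "nat \<Rightarrow> graph \<Rightarrow> bool" where
  "is_graph n G \<longleftrightarrow>
     (\<forall>u\<in>{1..n}. \<forall>v\<in>{1..n}. fst G u v = fst G v u) \<and> (\<forall>v\<in>{1..n}. \<not> fst G v v)"

definition valuation :: "nat \<Rightarrow> (nat \<Rightarrow> nat) \<Rightarrow> bool" where
  "valuation n \<nu> \<longleftrightarrow> (\<forall>x. \<nu> x \<in> {1..n})"

primrec eval :: "nat \<Rightarrow> graph \<Rightarrow> ('r \<Rightarrow> nat list \<Rightarrow> real) \<Rightarrow> (nat \<Rightarrow> nat) \<Rightarrow> 'r expr \<Rightarrow> real" where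
  "eval n G I \<nu> (EqA x y) = (if \<nu> x = \<nu> y then 1 else 0)"
| "eval n G I \<nu> (NeqA x y) = (if \<nu> x \<noteq> \<nu> y then 1 else 0)"
| "eval n G I \<nu> (Edge x y) = (if fst G (\<nu> x) (\<nu> y) then 1 else 0)"
| "eval n G I \<nu> (Col x s) = snd G (\<nu> x) s"
| "eval n G I \<nu> (Mul a b) = eval n G I \<nu> a * eval n G I \<nu> b"
| "eval n G I \<nu> (Add a b) = eval n G I \<nu> a + eval n G I \<nu> b"
| "eval n G I \<nu> (Scale c a) = c * eval n G I \<nu> a"
| "eval n G I \<nu> (App f as) = snd f (map (eval n G I \<nu>) as)"
| "eval n G I \<nu> (Sum x a) = (\<Sum>v\<in>{1..n}. eval n G I (\<nu>(x := v)) a)"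
| "eval n G I \<nu> (Rel r zs) = I r (map \<nu> zs)"

primrec tl_over :: "(nat \<times> (real list \<Rightarrow> real)) set \<Rightarrow> nat \<Rightarrow> 'r expr \<Rightarrow> bool" where
  "tl_over \<Omega> l (EqA x y) = True"
| "tl_over \<Omega> l (NeqA x y) = True"
| "tl_over \<Omega> l (Edge x y) = True"
| "tl_over \<Omega> l (Col x s) = (1 \<le> s \<and> s \<le> l)"
| "tl_over \<Omega> l (Mul a b) = (tl_over \<Omega> l a \<and> tl_over \<Omega> l b)"
| "tl_over \<Omega> l (Add a b) = (tl_over \<Omega> l a \<and> tl_over \<Omega> l b)"
| "tl_over \<Omega> l (Scale c a) = tl_over \<Omega> l a"
| "tl_over \<Omega> l (App f as) = (f \<in> \<Omega> \<and> length as = fst f \<and> list_all (tl_over \<Omega> l) as)"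
| "tl_over \<Omega> l (Sum x a) = tl_over \<Omega> l a"
| "tl_over \<Omega> l (Rel r zs) = False"

primrec is_prod :: "nat \<Rightarrow> 'r expr \<Rightarrow> bool" where
  "is_prod l (EqA x y) = True"
| "is_prod l (NeqA x y) = True"
| "is_prod l (Edge x y) = True"
| "is_prod l (Col x s) = (1 \<le> s \<and> s \<le> l)"
| "is_prod l (Mul a b) = (is_prod l a \<and> is_prod l b)"
| "is_prod l (Add a b) = False"
| "is_prod l (Scale c a) = False"
| "is_prod l (App f as) = False"
| "is_prod l (Sum x a) = False"
| "is_prod l (Rel r zs) = True"

primrec atoms_of :: "'r expr \<Rightarrow> 'r expr list" where
  "atoms_of (EqA x y) = [EqA x y]"
| "atoms_of (NeqA x y) = [NeqA x y]"
| "atoms_of (Edge x y) = [Edge x y]"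
| "atoms_of (Col x s) = [Col x s]"
| "atoms_of (Mul a b) = atoms_of a @ atoms_of b"
| "atoms_of (Add a b) = [Add a b]"
| "atoms_of (Scale c a) = [Scale c a]"
| "atoms_of (App f as) = [App f as]"
| "atoms_of (Sum x a) = [Sum x a]"
| "atoms_of (Rel r zs) = [Rel r zs]"

definition sumvars :: "nat list \<Rightarrow> 'r expr \<Rightarrow> 'r expr" where
  "sumvars ys \<theta> = foldr Sum ys \<theta>"

definition is_conj :: "nat \<Rightarrow> nat list \<Rightarrow> 'r expr \<Rightarrow> bool" where
  "is_conj l ys \<theta> \<longleftrightarrow> distinct ys \<and> is_prod l \<theta>"

text \<open>Hyperedge multiset: one hyperedge (its variable set) per atom.\<close>
definition hedges :: "'r expr \<Rightarrow> nat set multiset" where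
  "hedges \<theta> = mset (map vars (atoms_of \<theta>))"

text \<open>Eliminate vertices in the given order (v_N first), returning the
  list of the numbers |U_j - X|.\<close>
fun elim :: "nat set \<Rightarrow> nat set multiset \<Rightarrow> nat list \<Rightarrow> nat list" where
  "elim X E [] = []"
| "elim X E (v # vs) =
     (let D = filter_mset (\<lambda>F. v \<in> F) E; U = \<Union> (set_mset D)
      in card (U - X) # elim X ((E - D) + {# U - {v} #}) vs)"

text \<open>Elimination sequences v_1..v_N: all vertices, distinguished ones first.\<close>
definition elim_seq :: "nat set \<Rightarrow> nat set \<Rightarrow> nat list \<Rightarrow> bool" where
  "elim_seq X Y \<sigma> \<longleftrightarrow> distinct \<sigma> \<and> set \<sigma> = X \<union> Y \<and> set (take (card X) \<sigma>) = X"

definition induced_width :: "nat set \<Rightarrow> nat set multiset \<Rightarrow> nat list \<Rightarrow> int" where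
  "induced_width X E \<sigma> =
     (let ws = elim X E (rev (drop (card X) \<sigma>))
      in if ws = [] then int (card X) - 1 else int (card X) + int (Max (set ws)) - 1)"

definition conj_tw :: "nat list \<Rightarrow> 'r expr \<Rightarrow> int" where
  "conj_tw ys \<theta> =
     Min {induced_width (free (sumvars ys \<theta>)) (hedges \<theta>) \<sigma> | \<sigma>.
            elim_seq (free (sumvars ys \<theta>)) (set ys) \<sigma>}"

text \<open>Replace each maximal function application by a fresh relation atom;
  the fresh symbol is the (reversed) position of the subexpression, so
  different occurrences get different symbols.\<close>
primrec nofun :: "nat list \<Rightarrow> 'r expr \<Rightarrow> nat list expr" where
  "nofun p (EqA x y) = EqA x y"
| "nofun p (NeqA x y) = NeqA x y"
| "nofun p (Edge x y) = Edge x y"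
| "nofun p (Col x s) = Col x s"
| "nofun p (Mul a b) = Mul (nofun (0 # p) a) (nofun (1 # p) b)"
| "nofun p (Add a b) = Add (nofun (0 # p) a) (nofun (1 # p) b)"
| "nofun p (Scale c a) = Scale c (nofun (0 # p) a)"
| "nofun p (App f as) = Rel (rev p) (sorted_list_of_set (\<Union> (set (map free as))))"
| "nofun p (Sum x a) = Sum x (nofun (0 # p) a)"
| "nofun p (Rel r zs) = Rel (rev p) zs"

primrec maxargs :: "'r expr \<Rightarrow> 'r expr list" where
  "maxargs (EqA x y) = []"
| "maxargs (NeqA x y) = []"
| "maxargs (Edge x y) = []"
| "maxargs (Col x s) = []"
| "maxargs (Mul a b) = maxargs a @ maxargs b"
| "maxargs (Add a b) = maxargs a @ maxargs b"
| "maxargs (Scale c a) = maxargs a"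
| "maxargs (App f as) = as"
| "maxargs (Sum x a) = maxargs a"
| "maxargs (Rel r zs) = []"

definition cond_a :: "nat \<Rightarrow> nat \<Rightarrow> nat \<Rightarrow> nat list expr \<Rightarrow> bool" where
  "cond_a n l k \<phi> \<longleftrightarrow>
     (\<exists>cs :: (real \<times> nat list \<times> nat list expr) list.
        (\<forall>(a, ys, \<theta>) \<in> set cs. is_conj l ys \<theta> \<and> conj_tw ys \<theta> \<le> int k) \<and>
        (\<forall>G I \<nu>. is_graph n G \<longrightarrow> valuation n \<nu> \<longrightarrow>
            eval n G I \<nu> (nofun [] \<phi>) =
            (\<Sum>(a, ys, \<theta>) \<leftarrow> cs. a * eval n G I \<nu> (sumvars ys \<theta>))))"

inductive tw_le :: "nat \<Rightarrow> nat \<Rightarrow> nat \<Rightarrow> nat list expr \<Rightarrow> bool" for n l k where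
  "cond_a n l k \<phi> \<Longrightarrow> (\<forall>\<psi> \<in> set (maxargs \<phi>). tw_le n l k \<psi>) \<Longrightarrow> tw_le n l k \<phi>"

end

theory Submission
  imports Defs
begin

lemma finite_free: "finite (free e)"
  by (induction e) auto

lemma finite_vars: "finite (vars e)"
  by (induction e) auto

lemma free_sub_vars: "free e \<subseteq> vars e"
  by (induction e) auto

lemma eval_free:
  "(\<forall>z\<in>free e. \<nu> z = \<nu>' z) \<Longrightarrow> eval n G I \<nu> e = eval n G I \<nu>' e"
proof (induction e arbitrary: \<nu> \<nu>')
  case (App f as)
  then have "map (eval n G I \<nu>) as = map (eval n G I \<nu>') as"
    by (auto intro!: map_cong)
  then show ?case by (metis eval.simps(8))
next
  case (Sum x a)
  then show ?case by (auto intro!: sum.cong)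
next
  case (Rel r zs)
  then show ?case by (simp cong: map_cong)
next
  case (Mul a b)
  then have "eval n G I \<nu> a = eval n G I \<nu>' a" "eval n G I \<nu> b = eval n G I \<nu>' b" by auto
  then show ?case by simp
next
  case (Add a b)
  then have "eval n G I \<nu> a = eval n G I \<nu>' a" "eval n G I \<nu> b = eval n G I \<nu>' b" by auto
  then show ?case by simp
qed auto

lemma eval_I:
  "tl_over \<Omega> l e \<Longrightarrow> eval n G I \<nu> e = eval n G I' \<nu> e"
proof (induction e arbitrary: \<nu>)
  case (App f as)
  then have "map (eval n G I \<nu>) as = map (eval n G I' \<nu>) as"
    by (auto intro!: map_cong simp: list_all_iff)
  then show ?case by (metis eval.simps(8))
qed auto

primrec sumL :: "nat \<Rightarrow> (nat \<Rightarrow> nat) \<Rightarrow> nat list \<Rightarrow> ((nat \<Rightarrow> nat) \<Rightarrow> real) \<Rightarrow> real" where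
  "sumL n \<beta> [] h = h \<beta>"
| "sumL n \<beta> (y # ys) h = (\<Sum>u\<in>{1..n}. sumL n (\<beta>(y := u)) ys h)"

lemma eval_sumvars: "eval n G I \<nu> (sumvars ys \<theta>) = sumL n \<nu> ys (\<lambda>\<beta>. eval n G I \<beta> \<theta>)"
  by (induction ys arbitrary: \<nu>) (auto simp: sumvars_def)

lemma sumL_append: "sumL n \<beta> (xs @ ys) h = sumL n \<beta> xs (\<lambda>\<beta>'. sumL n \<beta>' ys h)"
  by (induction xs arbitrary: \<beta>) auto

lemma sumL_cong: "(\<And>\<beta>. h \<beta> = h' \<beta>) \<Longrightarrow> sumL n \<beta> xs h = sumL n \<beta> xs h'"
  by (induction xs arbitrary: \<beta>) auto

lemma sumL_move: "sumL n \<beta> (as @ x # bs) h = sumL n \<beta> (x # as @ bs) h"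
proof (induction as arbitrary: \<beta>)
  case Nil
  then show ?case by simp
next
  case (Cons a as)
  have "sumL n \<beta> ((a # as) @ x # bs) h = (\<Sum>u\<in>{1..n}. \<Sum>w\<in>{1..n}. sumL n (\<beta>(a := u, x := w)) (as @ bs) h)"
    using Cons by simp
  also have "\<dots> = (\<Sum>w\<in>{1..n}. \<Sum>u\<in>{1..n}. sumL n (\<beta>(x := w, a := u)) (as @ bs) h)"
  proof (cases "a = x")
    case True
    then show ?thesis by (simp add: sum.swap[of _ "{1..n}" "{1..n}"])
  next
    case False
    then show ?thesis by (subst sum.swap) (simp add: fun_upd_twist)
  qed
  also have "\<dots> = sumL n \<beta> (x # (a # as) @ bs) h" by simp
  finally show ?case .
qed

lemma sumL_perm: "mset xs = mset ys \<Longrightarrow> sumL n \<beta> xs h = sumL n \<beta> ys h"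
proof (induction xs arbitrary: ys \<beta>)
  case Nil
  then show ?case by simp
next
  case (Cons x xs)
  then have "x \<in> set ys" by (metis list.set_intros(1) set_mset_mset)
  then obtain as bs where ys: "ys = as @ x # bs" by (meson split_list)
  then have "mset xs = mset (as @ bs)" using Cons.prems by simp
  then have "\<And>\<beta>. sumL n \<beta> xs h = sumL n \<beta> (as @ bs) h" using Cons.IH by blast
  then show ?case unfolding ys sumL_move by simp
qed

fun prodexp :: "'r expr list \<Rightarrow> 'r expr" where
  "prodexp [] = EqA 1 1"
| "prodexp (e # es) = Mul e (prodexp es)"

lemma eval_prodexp: "eval n G I \<nu> (prodexp es) = prod_list (map (eval n G I \<nu>) es)"
  by (induction es) auto

lemma tl_prodexp: "(\<forall>e\<in>set es. tl_over \<Omega> l e) \<Longrightarrow> tl_over \<Omega> l (prodexp es)"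
  by (induction es) auto

lemma vars_prodexp: "vars (prodexp es) \<subseteq> insert 1 (\<Union>(vars ` set es))"
  by (induction es) auto

lemma eval_prod_atoms: "is_prod l \<theta> \<Longrightarrow> eval n G I \<beta> \<theta> = prod_list (map (eval n G I \<beta>) (atoms_of \<theta>))"
  by (induction \<theta>) auto

lemma atoms_prod: "is_prod l \<theta> \<Longrightarrow> a \<in> set (atoms_of \<theta>) \<Longrightarrow>
   (\<exists>x y. a = EqA x y) \<or> (\<exists>x y. a = NeqA x y) \<or> (\<exists>x y. a = Edge x y) \<or>
   (\<exists>x s. a = Col x s \<and> 1 \<le> s \<and> s \<le> l) \<or> (\<exists>r zs. a = Rel r zs)"
  by (induction \<theta>) auto

fun lincomb :: "(real \<times> 'r expr) list \<Rightarrow> 'r expr" where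
  "lincomb [] = Scale 0 (EqA 1 1)"
| "lincomb ((a, e) # r) = Add (Scale a e) (lincomb r)"

lemma eval_lincomb: "eval n G I \<nu> (lincomb ps) = (\<Sum>(a, e) \<leftarrow> ps. a * eval n G I \<nu> e)"
  by (induction ps rule: lincomb.induct) auto

lemma tl_lincomb: "(\<forall>(a,e)\<in>set ps. tl_over \<Omega> l e) \<Longrightarrow> tl_over \<Omega> l (lincomb ps)"
  by (induction ps rule: lincomb.induct) auto

lemma vars_lincomb: "vars (lincomb ps) \<subseteq> insert 1 (\<Union>(a,e)\<in>set ps. vars e)"
  by (induction ps rule: lincomb.induct) auto

definition closeE :: "nat \<Rightarrow> nat list \<Rightarrow> 'r expr \<Rightarrow> 'r expr" where
  "closeE n ts e = foldr (\<lambda>t e. Scale (1 / real n) (Sum t e)) ts e"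

lemma closeE_props:
  "tl_over \<Omega> l e \<Longrightarrow> tl_over \<Omega> l (closeE n ts e)"
  "vars (closeE n ts e) \<subseteq> set ts \<union> vars e"
  "free (closeE n ts e) = free e - set ts"
  by (induction ts) (auto simp: closeE_def)

lemma closeE_eval:
  assumes "n \<ge> 1" and "set ts \<inter> T = {}"
    and dep: "\<And>\<nu> \<nu>'. valuation n \<nu> \<Longrightarrow> valuation n \<nu>' \<Longrightarrow> (\<forall>z\<in>T. \<nu> z = \<nu>' z) \<Longrightarrow>
       eval n G I \<nu> e = eval n G I \<nu>' e"
  shows "valuation n \<nu> \<Longrightarrow> eval n G I \<nu> (closeE n ts e) = eval n G I \<nu> e"
  using assms(2)
proof (induction ts arbitrary: \<nu>)
  case Nil
  then show ?case by (simp add: closeE_def)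
next
  case (Cons t ts)
  have "eval n G I \<nu> (closeE n (t # ts) e) = (1 / real n) * (\<Sum>u\<in>{1..n}. eval n G I (\<nu>(t := u)) (closeE n ts e))"
    by (simp add: closeE_def)
  also have "\<dots> = (1 / real n) * (\<Sum>u\<in>{1..n}. eval n G I \<nu> e)"
  proof -
    have "eval n G I (\<nu>(t := u)) (closeE n ts e) = eval n G I \<nu> e" if "u \<in> {1..n}" for u
    proof -
      have v: "valuation n (\<nu>(t := u))" using Cons.prems that by (auto simp: valuation_def)
      have d: "set ts \<inter> T = {}" using Cons.prems by auto
      have "eval n G I (\<nu>(t := u)) (closeE n ts e) = eval n G I (\<nu>(t := u)) e"
        using Cons.IH[OF v d] .
      also have "\<dots> = eval n G I \<nu> e"
        using dep[OF v Cons.prems(1)] Cons.prems(2) by auto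
      finally show ?thesis .
    qed
    then show ?thesis by simp
  qed
  also have "\<dots> = eval n G I \<nu> e" using assms(1) by simp
  finally show ?case .
qed

definition factor_ok :: "nat \<Rightarrow> (nat \<times> (real list \<Rightarrow> real)) set \<Rightarrow> nat \<Rightarrow> nat \<Rightarrow> nat set \<Rightarrow>
   (graph \<Rightarrow> (nat \<Rightarrow> nat) \<Rightarrow> real) \<Rightarrow> ((nat \<Rightarrow> nat) \<Rightarrow> 'r expr) \<Rightarrow> bool" where
  "factor_ok n \<Omega> l k S g F \<longleftrightarrow> finite S \<and>
     (\<forall>G \<beta> \<beta>'. (\<forall>z\<in>S. \<beta> z = \<beta>' z) \<longrightarrow> g G \<beta> = g G \<beta>') \<and>
     (\<forall>\<eta>. (\<forall>z. \<eta> z \<in> {1..k+1}) \<longrightarrow> tl_over \<Omega> l (F \<eta>) \<and> vars (F \<eta>) \<subseteq> {1..k+1} \<and>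
        (\<forall>G I \<nu>. is_graph n G \<longrightarrow> valuation n \<nu> \<longrightarrow> eval n G I \<nu> (F \<eta>) = g G (\<nu> \<circ> \<eta>)))"

definition valF :: "graph \<Rightarrow> (nat set \<times> (graph \<Rightarrow> (nat \<Rightarrow> nat) \<Rightarrow> real) \<times> ((nat \<Rightarrow> nat) \<Rightarrow> 'r expr)) list \<Rightarrow> (nat \<Rightarrow> nat) \<Rightarrow> real" where
  "valF G fs \<beta> = prod_list (map (\<lambda>t. fst (snd t) G \<beta>) fs)"

definition fresh :: "nat \<Rightarrow> (nat \<Rightarrow> nat) \<Rightarrow> nat set \<Rightarrow> nat" where
  "fresh k \<eta> A = (LEAST t. t \<in> {1..k+1} \<and> t \<notin> \<eta> ` A)"

lemma fresh_ok:
  assumes "finite A" "card A \<le> k"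
  shows "fresh k \<eta> A \<in> {1..k+1}" "fresh k \<eta> A \<notin> \<eta> ` A"
proof -
  have "card (\<eta> ` A) \<le> k" using assms card_image_le le_trans by blast
  have "\<not> {1..k+1} \<subseteq> \<eta> ` A"
  proof
    assume "{1..k+1} \<subseteq> \<eta> ` A"
    then have "card {1..k+1} \<le> card (\<eta> ` A)" using assms(1) by (intro card_mono) auto
    then show False using \<open>card (\<eta> ` A) \<le> k\<close> by simp
  qed
  then obtain t where "t \<in> {1..k+1} \<and> t \<notin> \<eta> ` A" by blast
  then have "fresh k \<eta> A \<in> {1..k+1} \<and> fresh k \<eta> A \<notin> \<eta> ` A"
    unfolding fresh_def by (rule LeastI)
  then show "fresh k \<eta> A \<in> {1..k+1}" "fresh k \<eta> A \<notin> \<eta> ` A" by auto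
qed

lemma prod_list_filter_split:
  "prod_list (map (h :: _ \<Rightarrow> real) xs) = prod_list (map h (filter P xs)) * prod_list (map h (filter (\<lambda>x. \<not> P x) xs))"
  by (induction xs) (auto simp: ac_simps)

lemma mset_filter_fst:
  "mset (map fst (filter (\<lambda>t. P (fst t)) fs)) = filter_mset P (mset (map fst fs))"
  by (induction fs) auto

type_synonym 'r factor = "nat set \<times> (graph \<Rightarrow> (nat \<Rightarrow> nat) \<Rightarrow> real) \<times> ((nat \<Rightarrow> nat) \<Rightarrow> 'r expr)"

lemma elim_lemma:
  fixes fs :: "'r factor list"
  assumes "\<forall>t\<in>set fs. factor_ok n \<Omega> l k (fst t) (fst (snd t)) (snd (snd t))"
    and "finite X"
    and "\<forall>w\<in>set (elim X (mset (map fst fs)) L). card X + w \<le> k + 1"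
  shows "\<exists>fs' :: 'r factor list. (\<forall>t\<in>set fs'. factor_ok n \<Omega> l k (fst t) (fst (snd t)) (snd (snd t))) \<and>
     (\<forall>G \<beta>. sumL n \<beta> (rev L) (valF G fs) = valF G fs' \<beta>)"
  using assms
proof (induction L arbitrary: fs)
  case Nil
  then show ?case by force
next
  case (Cons v L)
  define D where "D = filter (\<lambda>t. v \<in> fst t) fs"
  define R where "R = filter (\<lambda>t. \<not> v \<in> fst t) fs"
  define U where "U = \<Union>(fst ` set D)"
  define gN where "gN = (\<lambda>G \<beta>. \<Sum>u\<in>{1..n}. valF G D (\<beta>(v := u)))"
  define FN where "FN = (\<lambda>\<eta>. Sum (fresh k \<eta> (U - {v}))
      (prodexp (map (\<lambda>t. snd (snd t) (\<eta>(v := fresh k \<eta> (U - {v})))) D)))"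
  define fs1 where "fs1 = R @ [(U - {v}, gN, FN)]"
  have okfs: "factor_ok n \<Omega> l k (fst t) (fst (snd t)) (snd (snd t))" if "t \<in> set fs" for t
    using Cons.prems(1) that by blast
  have Dm: "filter_mset (\<lambda>F. v \<in> F) (mset (map fst fs)) = mset (map fst D)"
    unfolding D_def using mset_filter_fst[of "\<lambda>F. v \<in> F" fs] by simp
  have Rm: "mset (map fst fs) - mset (map fst D) = mset (map fst R)"
  proof -
    have "mset (map fst fs) = filter_mset (\<lambda>F. v \<in> F) (mset (map fst fs)) + filter_mset (\<lambda>F. v \<notin> F) (mset (map fst fs))"
      by (rule multiset_partition)
    moreover have "filter_mset (\<lambda>F. v \<notin> F) (mset (map fst fs)) = mset (map fst R)"
      unfolding R_def using mset_filter_fst[of "\<lambda>F. v \<notin> F" fs] by simp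
    ultimately have "mset (map fst fs) = mset (map fst D) + mset (map fst R)" using Dm by metis
    then show ?thesis by (metis add_diff_cancel_left')
  qed
  have UD: "\<Union> (set_mset (mset (map fst D))) = U" unfolding U_def by simp
  have el: "elim X (mset (map fst fs)) (v # L) = card (U - X) # elim X (mset (map fst fs1)) L"
    using Dm Rm UD by (simp add: Let_def fs1_def)
  have cardU: "card X + card (U - X) \<le> k + 1" using Cons.prems(3) el by simp
  have finU: "finite U" unfolding U_def D_def using okfs by (auto simp: factor_ok_def)
  have cU: "card U \<le> k + 1"
  proof -
    have "U \<subseteq> (U - X) \<union> X" by auto
    then have "card U \<le> card ((U - X) \<union> X)" using finU Cons.prems(2) by (intro card_mono) auto
    also have "\<dots> \<le> card (U - X) + card X" by (rule card_Un_le)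
    finally show ?thesis using cardU by simp
  qed
  have cUv: "card (U - {v}) \<le> k"
  proof (cases "v \<in> U")
    case True
    then show ?thesis using cU finU by simp
  next
    case False
    then have "U = {}" unfolding U_def D_def by auto
    then show ?thesis by simp
  qed
  have okN: "factor_ok n \<Omega> l k (U - {v}) gN FN"
    unfolding factor_ok_def
  proof (intro conjI allI impI)
    show "finite (U - {v})" using finU by simp
  next
    fix G and \<beta> \<beta>' :: "nat \<Rightarrow> nat"
    assume agree: "\<forall>z\<in>U - {v}. \<beta> z = \<beta>' z"
    have "valF G D (\<beta>(v := u)) = valF G D (\<beta>'(v := u))" for u :: nat
    proof -
      have "fst (snd t) G (\<beta>(v := u)) = fst (snd t) G (\<beta>'(v := u))" if "t \<in> set D" for t
      proof -
        have ok: "factor_ok n \<Omega> l k (fst t) (fst (snd t)) (snd (snd t))" using that okfs unfolding D_def by auto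
        have "fst t \<subseteq> U" using that unfolding U_def by auto
        then have "\<forall>z\<in>fst t. (\<beta>(v := u)) z = (\<beta>'(v := u)) z" using agree by auto
        then show ?thesis using ok unfolding factor_ok_def by blast
      qed
      then show ?thesis unfolding valF_def by (metis (mono_tags, lifting) map_eq_conv)
    qed
    then show "gN G \<beta> = gN G \<beta>'" unfolding gN_def by simp
  next
    fix \<eta> :: "nat \<Rightarrow> nat"
    assume tot: "\<forall>z. \<eta> z \<in> {1..k+1}"
    define f where "f = fresh k \<eta> (U - {v})"
    have f1: "f \<in> {1..k+1}" and f2: "f \<notin> \<eta> ` (U - {v})"
      unfolding f_def using fresh_ok[OF _ cUv] finU by auto
    define \<eta>' where "\<eta>' = \<eta>(v := f)"
    have tot': "\<forall>z. \<eta>' z \<in> {1..k+1}" using tot f1 unfolding \<eta>'_def by auto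
    have okD: "factor_ok n \<Omega> l k (fst t) (fst (snd t)) (snd (snd t))" if "t \<in> set D" for t
      using that okfs unfolding D_def by auto
    have FNe: "FN \<eta> = Sum f (prodexp (map (\<lambda>t. snd (snd t) \<eta>') D))"
      unfolding FN_def f_def \<eta>'_def by simp
    have okD2: "tl_over \<Omega> l (snd (snd t) \<eta>') \<and> vars (snd (snd t) \<eta>') \<subseteq> {1..k+1}" if "t \<in> set D" for t
      using okD[OF that] tot' unfolding factor_ok_def by blast
    show "tl_over \<Omega> l (FN \<eta>)"
      unfolding FNe using okD2 by (auto intro!: tl_prodexp)
    show "vars (FN \<eta>) \<subseteq> {1..k+1}"
    proof -
      have "vars (prodexp (map (\<lambda>t. snd (snd t) \<eta>') D)) \<subseteq> {1..k+1}"
      proof -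
        have U1: "(\<Union>t\<in>set D. vars (snd (snd t) \<eta>')) \<subseteq> {1..k+1}" using okD2 by blast
        have "insert 1 (\<Union>x\<in>set (map (\<lambda>t. snd (snd t) \<eta>') D). vars x) \<subseteq> {1..k+1}" using U1 by auto
        then show ?thesis by (rule order_trans[OF vars_prodexp])
      qed
      then show ?thesis unfolding FNe using f1 by simp
    qed
    show "eval n G I \<nu> (FN \<eta>) = gN G (\<nu> \<circ> \<eta>)" if gG: "is_graph n G" and v\<nu>: "valuation n \<nu>" for G I \<nu>
    proof -
      have "eval n G I (\<nu>(f := u)) (snd (snd t) \<eta>') = fst (snd t) G ((\<nu> \<circ> \<eta>)(v := u))"
        if tD: "t \<in> set D" and uu: "u \<in> {1..n}" for t u
      proof -
        have ok: "factor_ok n \<Omega> l k (fst t) (fst (snd t)) (snd (snd t))" using okD tD by auto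
        have vu: "valuation n (\<nu>(f := u))" using v\<nu> uu by (auto simp: valuation_def)
        have "eval n G I (\<nu>(f := u)) (snd (snd t) \<eta>') = fst (snd t) G (\<nu>(f := u) \<circ> \<eta>')"
          using ok tot' gG vu unfolding factor_ok_def by blast
        also have "\<dots> = fst (snd t) G ((\<nu> \<circ> \<eta>)(v := u))"
        proof -
          have sub: "fst t \<subseteq> U" using tD unfolding U_def by auto
          have "\<forall>z\<in>fst t. (\<nu>(f := u) \<circ> \<eta>') z = ((\<nu> \<circ> \<eta>)(v := u)) z"
          proof
            fix z assume "z \<in> fst t"
            then show "(\<nu>(f := u) \<circ> \<eta>') z = ((\<nu> \<circ> \<eta>)(v := u)) z"
              using sub f2 unfolding \<eta>'_def by (cases "z = v") force+
          qed
          then show ?thesis using ok unfolding factor_ok_def by blast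
        qed
        finally show ?thesis .
      qed
      then have "(\<Sum>u\<in>{1..n}. prod_list (map (\<lambda>t. eval n G I (\<nu>(f := u)) (snd (snd t) \<eta>')) D)) =
                 (\<Sum>u\<in>{1..n}. prod_list (map (\<lambda>t. fst (snd t) G ((\<nu> \<circ> \<eta>)(v := u))) D))"
        by (intro sum.cong refl arg_cong[where f = prod_list] map_cong) auto
      then show "eval n G I \<nu> (FN \<eta>) = gN G (\<nu> \<circ> \<eta>)"
        unfolding FNe gN_def valF_def by (simp add: eval_prodexp comp_def)
    qed
  qed
  have ok1: "\<forall>t\<in>set fs1. factor_ok n \<Omega> l k (fst t) (fst (snd t)) (snd (snd t))"
    unfolding fs1_def R_def using okfs okN by auto
  have w1: "\<forall>w\<in>set (elim X (mset (map fst fs1)) L). card X + w \<le> k + 1"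
    using Cons.prems(3) el by simp
  obtain fs' :: "'r factor list" where fs': "\<forall>t\<in>set fs'. factor_ok n \<Omega> l k (fst t) (fst (snd t)) (snd (snd t))"
    "\<forall>G \<beta>. sumL n \<beta> (rev L) (valF G fs1) = valF G fs' \<beta>"
    using Cons.IH[OF ok1 Cons.prems(2) w1] by blast
  have step: "(\<Sum>u\<in>{1..n}. valF G fs (\<beta>(v := u))) = valF G fs1 \<beta>" for G and \<beta> :: "nat \<Rightarrow> nat"
  proof -
    have R: "valF G R (\<beta>(v := u)) = valF G R \<beta>" for u :: nat
    proof -
      have "fst (snd t) G (\<beta>(v := u)) = fst (snd t) G \<beta>" if "t \<in> set R" for t
      proof -
        have ok: "factor_ok n \<Omega> l k (fst t) (fst (snd t)) (snd (snd t))" and nv: "v \<notin> fst t"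
          using that okfs unfolding R_def by auto
        then show ?thesis unfolding factor_ok_def by (metis fun_upd_other)
      qed
      then show ?thesis unfolding valF_def by (metis (mono_tags, lifting) map_eq_conv)
    qed
    have "valF G fs (\<beta>(v := u)) = valF G D (\<beta>(v := u)) * valF G R \<beta>" for u :: nat
      unfolding D_def R_def using R[of u, unfolded R_def]
      by (simp add: valF_def prod_list_filter_split[of _ fs "\<lambda>t. v \<in> fst t"])
    then have "(\<Sum>u\<in>{1..n}. valF G fs (\<beta>(v := u))) = gN G \<beta> * valF G R \<beta>"
      unfolding gN_def by (simp add: sum_distrib_right)
    also have "\<dots> = valF G fs1 \<beta>" unfolding fs1_def valF_def by simp
    finally show ?thesis .
  qed
  have "sumL n \<beta> (rev (v # L)) (valF G fs) = valF G fs' \<beta>" for G and \<beta> :: "nat \<Rightarrow> nat"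
  proof -
    have "sumL n \<beta> (rev (v # L)) (valF G fs) = sumL n \<beta> (rev L) (\<lambda>\<beta>'. \<Sum>u\<in>{1..n}. valF G fs (\<beta>'(v := u)))"
      by (simp add: sumL_append)
    also have "\<dots> = sumL n \<beta> (rev L) (valF G fs1)" using step by (intro sumL_cong) auto
    finally show ?thesis using fs'(2) by simp
  qed
  then show ?case using fs'(1) by blast
qed

fun sub :: "'r expr \<Rightarrow> nat list \<Rightarrow> 'r expr option" where
  "sub (App f as) [] = Some (App f as)"
| "sub (Mul a b) (i # r) = (if i = 0 then sub a r else sub b r)"
| "sub (Add a b) (i # r) = (if i = 0 then sub a r else sub b r)"
| "sub (Scale c a) (i # r) = sub a r"
| "sub (Sum x a) (i # r) = sub a r"
| "sub _ _ = None"

definition sw :: "'r expr list \<Rightarrow> nat list" where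
  "sw as = sorted_list_of_set (\<Union> (set (map free as)))"

definition valof :: "nat list \<Rightarrow> nat list \<Rightarrow> nat \<Rightarrow> nat" where
  "valof xs vals w = (case map_of (zip xs vals) w of None \<Rightarrow> 1 | Some v \<Rightarrow> v)"

fun appval :: "nat \<Rightarrow> graph \<Rightarrow> 'r expr option \<Rightarrow> nat list \<Rightarrow> real" where
  "appval n G (Some (App f as)) vals =
     (if length vals = length (sw as) then eval n G (\<lambda>_ _. 0) (valof (sw as) vals) (App f as) else 0)"
| "appval n G _ vals = 0"

lemma set_sw: "set (sw as) = \<Union> (set (map free as))"
  unfolding sw_def by (simp add: finite_free)

lemma valof_map: "w \<in> set xs \<Longrightarrow> valof xs (map g xs) w = g w"
  unfolding valof_def by (simp add: map_of_zip_map)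

lemma valof_comp: "length xs = length ys \<Longrightarrow> w \<in> set xs \<Longrightarrow> valof xs (map g ys) w = g (valof xs ys w)"
proof (induction xs ys rule: list_induct2)
  case Nil
  then show ?case by simp
next
  case (Cons x xs y ys)
  then show ?case by (cases "w = x") (auto simp: valof_def)
qed

lemma valof_range: "set ys \<subseteq> A \<Longrightarrow> 1 \<in> A \<Longrightarrow> valof xs ys w \<in> A"
proof (induction xs arbitrary: ys)
  case Nil
  then show ?case by (simp add: valof_def)
next
  case (Cons x xs)
  then show ?case by (cases ys) (auto simp: valof_def)
qed

lemma sub_App: "sub \<phi> r = Some (App f as) \<Longrightarrow> tl_over \<Omega> l \<phi> \<Longrightarrow>
   tl_over \<Omega> l (App f as) \<and> set as \<subseteq> set (maxargs \<phi>)"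
  by (induction \<phi> r rule: sub.induct) (auto split: if_splits)

lemma nofun_eval:
  "tl_over \<Omega> l \<psi> \<Longrightarrow> (\<forall>r vals. I (rev p @ r) vals = appval n G (sub \<psi> r) vals) \<Longrightarrow>
   eval n G I \<nu> (nofun p \<psi>) = eval n G I' \<nu> \<psi>"
proof (induction \<psi> arbitrary: p \<nu>)
  case (Mul a b)
  have ha: "\<forall>r vals. I (rev (0 # p) @ r) vals = appval n G (sub a r) vals"
    using Mul.prems(2) by (metis append.assoc append_Cons append_Nil rev.simps(2) sub.simps(2))
  have hb: "\<forall>r vals. I (rev (1 # p) @ r) vals = appval n G (sub b r) vals"
    using Mul.prems(2) by (metis append.assoc append_Cons append_Nil rev.simps(2) sub.simps(2) one_neq_zero)
  show ?case using Mul.IH(1)[OF _ ha] Mul.IH(2)[OF _ hb] Mul.prems(1) by simp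
next
  case (Add a b)
  have ha: "\<forall>r vals. I (rev (0 # p) @ r) vals = appval n G (sub a r) vals"
    using Add.prems(2) by (metis append.assoc append_Cons append_Nil rev.simps(2) sub.simps(3))
  have hb: "\<forall>r vals. I (rev (1 # p) @ r) vals = appval n G (sub b r) vals"
    using Add.prems(2) by (metis append.assoc append_Cons append_Nil rev.simps(2) sub.simps(3) one_neq_zero)
  show ?case using Add.IH(1)[OF _ ha] Add.IH(2)[OF _ hb] Add.prems(1) by simp
next
  case (Scale c a)
  have ha: "\<forall>r vals. I (rev (0 # p) @ r) vals = appval n G (sub a r) vals"
    using Scale.prems(2) by (metis append.assoc append_Cons append_Nil rev.simps(2) sub.simps(4))
  show ?case using Scale.IH[OF _ ha] Scale.prems(1) by simp
next
  case (Sum x a)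
  have ha: "\<forall>r vals. I (rev (0 # p) @ r) vals = appval n G (sub a r) vals"
    using Sum.prems(2) by (metis append.assoc append_Cons append_Nil rev.simps(2) sub.simps(5))
  show ?case using Sum.IH[OF _ ha] Sum.prems(1) by simp
next
  case (App f as)
  have "eval n G I \<nu> (nofun p (App f as)) = I (rev p) (map \<nu> (sw as))"
    by (simp add: sw_def)
  also have "\<dots> = eval n G (\<lambda>_ _. 0) (valof (sw as) (map \<nu> (sw as))) (App f as)"
    using App.prems(2)[rule_format, of "[]" "map \<nu> (sw as)"] by simp
  also have "\<dots> = eval n G (\<lambda>_ _. 0) \<nu> (App f as)"
    by (rule eval_free) (auto simp: valof_map set_sw)
  also have "\<dots> = eval n G I' \<nu> (App f as)"
    by (rule eval_I[OF App.prems(1)])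
  finally show ?case .
qed auto

definition good :: "nat \<Rightarrow> (nat \<times> (real list \<Rightarrow> real)) set \<Rightarrow> nat \<Rightarrow> nat \<Rightarrow> nat list expr \<Rightarrow> (nat \<Rightarrow> nat) \<Rightarrow> nat list expr \<Rightarrow> bool" where
  "good n \<Omega> l k \<psi> \<rho> e \<longleftrightarrow> tl_over \<Omega> l e \<and> vars e \<subseteq> {1..k+1} \<and>
     (\<forall>G I \<nu>. is_graph n G \<longrightarrow> valuation n \<nu> \<longrightarrow> eval n G I \<nu> e = eval n G I (\<nu> \<circ> \<rho>) \<psi>)"

definition relF :: "nat list expr \<Rightarrow> (nat list expr \<Rightarrow> (nat \<Rightarrow> nat) \<Rightarrow> nat list expr) \<Rightarrow> (nat \<Rightarrow> nat) \<Rightarrow> nat list \<Rightarrow> nat list \<Rightarrow> nat list expr" where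
  "relF \<phi> \<Phi> \<eta> r zs = (case sub \<phi> r of
      Some (App f as) \<Rightarrow> (if length zs = length (sw as)
          then App f (map (\<lambda>a. \<Phi> a (valof (sw as) (map \<eta> zs))) as) else Scale 0 (EqA 1 1))
    | _ \<Rightarrow> Scale 0 (EqA 1 1))"

fun atomF :: "nat list expr \<Rightarrow> (nat list expr \<Rightarrow> (nat \<Rightarrow> nat) \<Rightarrow> nat list expr) \<Rightarrow> (nat \<Rightarrow> nat) \<Rightarrow> nat list expr \<Rightarrow> nat list expr" where
  "atomF \<phi> \<Phi> \<eta> (EqA x y) = EqA (\<eta> x) (\<eta> y)"
| "atomF \<phi> \<Phi> \<eta> (NeqA x y) = NeqA (\<eta> x) (\<eta> y)"
| "atomF \<phi> \<Phi> \<eta> (Edge x y) = Edge (\<eta> x) (\<eta> y)"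
| "atomF \<phi> \<Phi> \<eta> (Col x s) = Col (\<eta> x) s"
| "atomF \<phi> \<Phi> \<eta> (Rel r zs) = relF \<phi> \<Phi> \<eta> r zs"
| "atomF \<phi> \<Phi> \<eta> _ = Scale 0 (EqA 1 1)"

definition Iphi :: "nat list expr \<Rightarrow> nat \<Rightarrow> graph \<Rightarrow> nat list \<Rightarrow> nat list \<Rightarrow> real" where
  "Iphi \<phi> n G r vals = appval n G (sub \<phi> r) vals"

lemma rel_ok:
  assumes tl: "tl_over \<Omega> l \<phi>"
    and H: "\<forall>\<psi>\<in>set (maxargs \<phi>). tl_over \<Omega> l \<psi> \<longrightarrow> (\<forall>\<rho>. (\<forall>z. \<rho> z \<in> {1..k+1}) \<longrightarrow> good n \<Omega> l k \<psi> \<rho> (\<Phi> \<psi> \<rho>))"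
  shows "factor_ok n \<Omega> l k (set zs) (\<lambda>G \<beta>. eval n G (Iphi \<phi> n G) \<beta> (Rel r zs)) (\<lambda>\<eta>. relF \<phi> \<Phi> \<eta> r zs)"
  unfolding factor_ok_def
proof (intro conjI allI impI)
  show "finite (set zs)" by simp
next
  fix G and \<beta> \<beta>' :: "nat \<Rightarrow> nat"
  assume "\<forall>z\<in>set zs. \<beta> z = \<beta>' z"
  then have "map \<beta> zs = map \<beta>' zs" by simp
  then show "eval n G (Iphi \<phi> n G) \<beta> (Rel r zs) = eval n G (Iphi \<phi> n G) \<beta>' (Rel r zs)" by (metis eval.simps(10))
next
  fix \<eta> :: "nat \<Rightarrow> nat"
  assume tot: "\<forall>z. \<eta> z \<in> {1..k+1}"
  have "tl_over \<Omega> l (relF \<phi> \<Phi> \<eta> r zs) \<and> vars (relF \<phi> \<Phi> \<eta> r zs) \<subseteq> {1..k+1} \<and>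
     (\<forall>G I \<nu>. is_graph n G \<longrightarrow> valuation n \<nu> \<longrightarrow> eval n G I \<nu> (relF \<phi> \<Phi> \<eta> r zs) = eval n G (Iphi \<phi> n G) (\<nu> \<circ> \<eta>) (Rel r zs))"
  proof (cases "\<exists>f as. sub \<phi> r = Some (App f as) \<and> length zs = length (sw as)")
    case True
    then obtain f as where s: "sub \<phi> r = Some (App f as)" and len: "length zs = length (sw as)" by blast
    define \<rho> where "\<rho> = valof (sw as) (map \<eta> zs)"
    have rtot: "\<forall>z. \<rho> z \<in> {1..k+1}" unfolding \<rho>_def using tot by (intro allI valof_range) auto
    have sa: "tl_over \<Omega> l (App f as) \<and> set as \<subseteq> set (maxargs \<phi>)" using sub_App[OF s tl] .
    have ga: "good n \<Omega> l k a \<rho> (\<Phi> a \<rho>)" if "a \<in> set as" for a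
      using H sa that rtot by (auto simp: list_all_iff)
    have rf: "relF \<phi> \<Phi> \<eta> r zs = App f (map (\<lambda>a. \<Phi> a \<rho>) as)"
      unfolding relF_def \<rho>_def using s len by simp
    show ?thesis
    proof (intro conjI allI impI)
      show "tl_over \<Omega> l (relF \<phi> \<Phi> \<eta> r zs)"
        unfolding rf using sa ga by (auto simp: good_def list_all_iff)
      show "vars (relF \<phi> \<Phi> \<eta> r zs) \<subseteq> {1..k+1}"
        unfolding rf using ga by (auto simp: good_def)
      fix G I \<nu> assume gG: "is_graph n G" and v\<nu>: "valuation n \<nu>"
      have v2: "valuation n (\<nu> \<circ> \<rho>)" using v\<nu> by (simp add: valuation_def)
      have "eval n G I \<nu> (\<Phi> a \<rho>) = eval n G (\<lambda>_ _. 0) (valof (sw as) (map (\<nu> \<circ> \<eta>) zs)) a"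
        if a: "a \<in> set as" for a
      proof -
        have "eval n G I \<nu> (\<Phi> a \<rho>) = eval n G I (\<nu> \<circ> \<rho>) a"
          using ga[OF a] gG v\<nu> unfolding good_def by blast
        also have "\<dots> = eval n G (\<lambda>_ _. 0) (\<nu> \<circ> \<rho>) a"
          using sa a by (intro eval_I) (auto simp: list_all_iff)
        also have "\<dots> = eval n G (\<lambda>_ _. 0) (valof (sw as) (map (\<nu> \<circ> \<eta>) zs)) a"
        proof (rule eval_free, intro ballI)
          fix w assume "w \<in> free a"
          then have "w \<in> set (sw as)" using a by (auto simp: set_sw)
          then show "(\<nu> \<circ> \<rho>) w = valof (sw as) (map (\<nu> \<circ> \<eta>) zs) w"
            unfolding \<rho>_def using valof_comp[of "sw as" "map \<eta> zs" w \<nu>] len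
            by (simp add: map_map)
        qed
        finally show ?thesis .
      qed
      then have "map (\<lambda>x. eval n G I \<nu> (\<Phi> x \<rho>)) as = map (eval n G (\<lambda>_ _. 0) (valof (sw as) (map (\<nu> \<circ> \<eta>) zs))) as"
        by auto
      then have meq: "map (\<lambda>x. eval n G I \<nu> (\<Phi> x \<rho>)) as = map (eval n G (\<lambda>_ _. 0) (valof (sw as) (map (\<nu> \<circ> \<eta>) zs))) as" .
      have "eval n G I \<nu> (relF \<phi> \<Phi> \<eta> r zs) = snd f (map (\<lambda>x. eval n G I \<nu> (\<Phi> x \<rho>)) as)"
        unfolding rf by (simp add: comp_def)
      also have "\<dots> = snd f (map (eval n G (\<lambda>_ _. 0) (valof (sw as) (map (\<nu> \<circ> \<eta>) zs))) as)"
        using meq by (rule arg_cong)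
      also have "\<dots> = eval n G (Iphi \<phi> n G) (\<nu> \<circ> \<eta>) (Rel r zs)"
        using s len by (simp add: Iphi_def)
      finally show "eval n G I \<nu> (relF \<phi> \<Phi> \<eta> r zs) = eval n G (Iphi \<phi> n G) (\<nu> \<circ> \<eta>) (Rel r zs)" .
    qed
  next
    case False
    then have rf: "relF \<phi> \<Phi> \<eta> r zs = Scale 0 (EqA 1 1)"
      unfolding relF_def by (auto split: option.splits expr.splits)
    have "appval n G (sub \<phi> r) vals = 0" if "length vals = length zs" for G and vals :: "nat list"
      using False that by (cases "sub \<phi> r" rule: option.exhaust; cases "the (sub \<phi> r)") auto
    then show ?thesis unfolding rf by (simp add: Iphi_def)
  qed
  then show "tl_over \<Omega> l (relF \<phi> \<Phi> \<eta> r zs)" "vars (relF \<phi> \<Phi> \<eta> r zs) \<subseteq> {1..k+1}"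
    "\<And>G I \<nu>. is_graph n G \<Longrightarrow> valuation n \<nu> \<Longrightarrow> eval n G I \<nu> (relF \<phi> \<Phi> \<eta> r zs) = eval n G (Iphi \<phi> n G) (\<nu> \<circ> \<eta>) (Rel r zs)"
    by auto
qed

lemma atom_ok:
  assumes tl: "tl_over \<Omega> l \<phi>"
    and H: "\<forall>\<psi>\<in>set (maxargs \<phi>). tl_over \<Omega> l \<psi> \<longrightarrow> (\<forall>\<rho>. (\<forall>z. \<rho> z \<in> {1..k+1}) \<longrightarrow> good n \<Omega> l k \<psi> \<rho> (\<Phi> \<psi> \<rho>))"
    and pr: "is_prod l \<theta>" and a: "a \<in> set (atoms_of \<theta>)"
  shows "factor_ok n \<Omega> l k (vars a) (\<lambda>G \<beta>. eval n G (Iphi \<phi> n G) \<beta> a) (\<lambda>\<eta>. atomF \<phi> \<Phi> \<eta> a)"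
proof -
  have dep: "\<forall>G \<beta> \<beta>'. (\<forall>z\<in>vars a. \<beta> z = \<beta>' z) \<longrightarrow> eval n G (Iphi \<phi> n G) \<beta> a = eval n G (Iphi \<phi> n G) \<beta>' a"
    using free_sub_vars eval_free by (metis subsetD)
  consider (eq) x y where "a = EqA x y" | (neq) x y where "a = NeqA x y" | (ed) x y where "a = Edge x y"
    | (col) x s where "a = Col x s" "1 \<le> s" "s \<le> l" | (rel) r zs where "a = Rel r zs"
    using atoms_prod[OF pr a] by blast
  then show ?thesis
  proof cases
    case eq
    then show ?thesis using dep unfolding factor_ok_def by auto
  next
    case neq
    then show ?thesis using dep unfolding factor_ok_def by auto
  next
    case ed
    then show ?thesis using dep unfolding factor_ok_def by auto
  next
    case col
    then show ?thesis using dep unfolding factor_ok_def by auto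
  next
    case rel
    then show ?thesis using rel_ok[OF tl H] by simp
  qed
qed

lemma free_sumvars: "free (sumvars ys \<theta>) = free \<theta> - set ys"
  by (induction ys) (auto simp: sumvars_def)

lemma set_drop_distinct: "distinct xs \<Longrightarrow> set (drop m xs) = set xs - set (take m xs)"
  by (metis Diff_triv Un_Diff append_take_drop_id distinct_append Int_commute set_append
      Diff_cancel sup_bot.left_neutral)

lemma conj_expr:
  fixes \<theta> :: "nat list expr" and AF :: "nat list expr \<Rightarrow> (nat \<Rightarrow> nat) \<Rightarrow> nat list expr" and J :: "graph \<Rightarrow> nat list \<Rightarrow> nat list \<Rightarrow> real"
  assumes cj: "is_conj l ys \<theta>" and tw: "conj_tw ys \<theta> \<le> int k"
    and aok: "\<forall>a\<in>set (atoms_of \<theta>). factor_ok n \<Omega> l k (vars a) (\<lambda>G \<beta>. eval n G (J G) \<beta> a) (AF a)"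
    and tot: "\<forall>z. \<rho> z \<in> {1..k+1}"
  shows "\<exists>e :: nat list expr. tl_over \<Omega> l e \<and> vars e \<subseteq> {1..k+1} \<and>
     (\<forall>G I \<nu>. is_graph n G \<longrightarrow> valuation n \<nu> \<longrightarrow> eval n G I \<nu> e = eval n G (J G) (\<nu> \<circ> \<rho>) (sumvars ys \<theta>))"
proof -
  define X where "X = free (sumvars ys \<theta>)"
  define Y where "Y = set ys"
  have finX: "finite X" unfolding X_def by (rule finite_free)
  have XY: "X \<inter> Y = {}" unfolding X_def Y_def free_sumvars by auto
  have dys: "distinct ys" and pr: "is_prod l \<theta>" using cj by (auto simp: is_conj_def)
  define S where "S = {induced_width X (hedges \<theta>) \<sigma> | \<sigma>. elim_seq X Y \<sigma>}"
  have finS: "finite S"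
  proof -
    have "{\<sigma>. elim_seq X Y \<sigma>} \<subseteq> {xs. set xs \<subseteq> X \<union> Y \<and> length xs \<le> card (X \<union> Y)}"
      by (auto simp: elim_seq_def distinct_card[symmetric])
    moreover have "finite {xs. set xs \<subseteq> X \<union> Y \<and> length xs \<le> card (X \<union> Y)}"
      using finX Y_def by (intro finite_lists_length_le) auto
    ultimately have "finite {\<sigma>. elim_seq X Y \<sigma>}" by (rule finite_subset)
    then have "finite ((\<lambda>\<sigma>. induced_width X (hedges \<theta>) \<sigma>) ` {\<sigma>. elim_seq X Y \<sigma>})" by simp
    moreover have "S = (\<lambda>\<sigma>. induced_width X (hedges \<theta>) \<sigma>) ` {\<sigma>. elim_seq X Y \<sigma>}"
      unfolding S_def by auto
    ultimately show ?thesis by simp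
  qed
  have neS: "S \<noteq> {}"
  proof -
    define \<sigma>0 where "\<sigma>0 = sorted_list_of_set X @ ys"
    have "elim_seq X Y \<sigma>0"
      unfolding elim_seq_def \<sigma>0_def using finX XY dys Y_def by auto
    then show ?thesis unfolding S_def by auto
  qed
  have "Min S \<le> int k" using tw unfolding conj_tw_def S_def X_def Y_def by simp
  then obtain \<sigma> where es: "elim_seq X Y \<sigma>" and iw: "induced_width X (hedges \<theta>) \<sigma> \<le> int k"
    using Min_in[OF finS neS] unfolding S_def by auto
  define L where "L = rev (drop (card X) \<sigma>)"
  define fs0 :: "nat list factor list" where
    "fs0 = map (\<lambda>a. (vars a, \<lambda>G \<beta>. eval n G (J G) \<beta> a, AF a)) (atoms_of \<theta>)"
  have hed: "mset (map fst fs0) = hedges \<theta>" unfolding fs0_def hedges_def by (simp add: comp_def)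
  have wbound: "\<forall>w\<in>set (elim X (mset (map fst fs0)) L). card X + w \<le> k + 1"
  proof
    fix w assume w: "w \<in> set (elim X (mset (map fst fs0)) L)"
    define ws where "ws = elim X (hedges \<theta>) L"
    have wws: "w \<in> set ws" using w hed unfolding ws_def by simp
    then have ne: "ws \<noteq> []" by auto
    have "int (card X) + int (Max (set ws)) - 1 \<le> int k"
      using iw ne unfolding induced_width_def ws_def L_def by (simp add: Let_def)
    moreover have "w \<le> Max (set ws)" using wws by simp
    ultimately show "card X + w \<le> k + 1" by linarith
  qed
  have ok0: "\<forall>t\<in>set fs0. factor_ok n \<Omega> l k (fst t) (fst (snd t)) (snd (snd t))"
    using aok unfolding fs0_def by auto
  obtain fs' :: "nat list factor list" where
    ok': "\<forall>t\<in>set fs'. factor_ok n \<Omega> l k (fst t) (fst (snd t)) (snd (snd t))"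
    and eq': "\<forall>G \<beta>. sumL n \<beta> (rev L) (valF G fs0) = valF G fs' \<beta>"
    using elim_lemma[OF ok0 finX wbound] by blast
  define e where "e = prodexp (map (\<lambda>t. snd (snd t) \<rho>) fs')"
  have okr: "tl_over \<Omega> l (snd (snd t) \<rho>) \<and> vars (snd (snd t) \<rho>) \<subseteq> {1..k+1} \<and>
     (\<forall>G I \<nu>. is_graph n G \<longrightarrow> valuation n \<nu> \<longrightarrow> eval n G I \<nu> (snd (snd t) \<rho>) = fst (snd t) G (\<nu> \<circ> \<rho>))"
    if "t \<in> set fs'" for t
    using ok' that tot unfolding factor_ok_def by blast
  have "tl_over \<Omega> l e" unfolding e_def using okr by (auto intro!: tl_prodexp)
  moreover have "vars e \<subseteq> {1..k+1}"
  proof -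
    have "insert 1 (\<Union>x\<in>set (map (\<lambda>t. snd (snd t) \<rho>) fs'). vars x) \<subseteq> {1..k+1}" using okr by auto
    then show ?thesis unfolding e_def by (rule order_trans[OF vars_prodexp])
  qed
  moreover have "eval n G I \<nu> e = eval n G (J G) (\<nu> \<circ> \<rho>) (sumvars ys \<theta>)"
    if gG: "is_graph n G" and v\<nu>: "valuation n \<nu>" for G I \<nu>
  proof -
    have "eval n G I \<nu> e = prod_list (map (\<lambda>t. eval n G I \<nu> (snd (snd t) \<rho>)) fs')"
      unfolding e_def by (simp add: eval_prodexp comp_def)
    also have "\<dots> = valF G fs' (\<nu> \<circ> \<rho>)"
      unfolding valF_def
    proof (intro arg_cong[where f = prod_list] map_cong refl)
      fix t assume "t \<in> set fs'"
      then show "eval n G I \<nu> (snd (snd t) \<rho>) = fst (snd t) G (\<nu> \<circ> \<rho>)"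
        using okr gG v\<nu> by blast
    qed
    also have "\<dots> = sumL n (\<nu> \<circ> \<rho>) (rev L) (valF G fs0)" 
    proof -
      from eq' have "sumL n (\<nu> \<circ> \<rho>) (rev L) (valF G fs0) = valF G fs' (\<nu> \<circ> \<rho>)" by blast
      then show ?thesis by simp
    qed
    also have "\<dots> = sumL n (\<nu> \<circ> \<rho>) (drop (card X) \<sigma>) (\<lambda>\<beta>. eval n G (J G) \<beta> \<theta>)"
      unfolding L_def
    proof (simp, rule sumL_cong)
      fix \<beta>
      show "valF G fs0 \<beta> = eval n G (J G) \<beta> \<theta>"
        unfolding valF_def fs0_def eval_prod_atoms[OF pr] by (simp add: comp_def)
    qed
    also have "\<dots> = sumL n (\<nu> \<circ> \<rho>) ys (\<lambda>\<beta>. eval n G (J G) \<beta> \<theta>)"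
    proof (rule sumL_perm)
      have d\<sigma>: "distinct \<sigma>" and s\<sigma>: "set \<sigma> = X \<union> Y" and st: "set (take (card X) \<sigma>) = X"
        using es by (auto simp: elim_seq_def)
      have "set (drop (card X) \<sigma>) = Y" using set_drop_distinct[OF d\<sigma>] s\<sigma> st XY by auto
      then show "mset (drop (card X) \<sigma>) = mset ys"
        using d\<sigma> dys Y_def by (simp add: set_eq_iff_mset_eq_distinct[symmetric])
    qed
    also have "\<dots> = eval n G (J G) (\<nu> \<circ> \<rho>) (sumvars ys \<theta>)" by (simp add: eval_sumvars)
    finally show ?thesis .
  qed
  ultimately show ?thesis by blast
qed

lemma eval_lincomb_map:
  "eval n G I \<nu> (lincomb (map (\<lambda>c. (fst c, E c)) cs)) = sum_list (map (\<lambda>c. fst c * eval n G I \<nu> (E c)) cs)"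
  by (induction cs) auto

lemma sum_triple:
  "(\<Sum>(a, ys, \<theta>) \<leftarrow> cs. a * h ys \<theta>) = sum_list (map (\<lambda>c. fst c * h (fst (snd c)) (snd (snd c))) cs)"
  by (induction cs) auto

lemma gen:
  "tw_le n l k \<phi> \<Longrightarrow> tl_over \<Omega> l \<phi> \<Longrightarrow> (\<forall>\<rho>. (\<forall>z. \<rho> z \<in> {1..k+1}) \<longrightarrow> (\<exists>e. good n \<Omega> l k \<phi> \<rho> e))"
proof (induction rule: tw_le.induct)
  case (1 \<phi>)
  show ?case
  proof (intro allI impI)
    fix \<rho> :: "nat \<Rightarrow> nat"
    assume tot: "\<forall>z. \<rho> z \<in> {1..k+1}"
    obtain cs :: "(real \<times> nat list \<times> nat list expr) list" where
      csok: "\<forall>(a, ys, \<theta>) \<in> set cs. is_conj l ys \<theta> \<and> conj_tw ys \<theta> \<le> int k"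
      and eqc: "\<forall>G I \<nu>. is_graph n G \<longrightarrow> valuation n \<nu> \<longrightarrow>
            eval n G I \<nu> (nofun [] \<phi>) = (\<Sum>(a, ys, \<theta>) \<leftarrow> cs. a * eval n G I \<nu> (sumvars ys \<theta>))"
      using "1"(1) unfolding cond_a_def by blast
    define \<Phi> where "\<Phi> = (\<lambda>\<psi> \<rho>'. SOME e. good n \<Omega> l k \<psi> \<rho>' e)"
    have H: "\<forall>\<psi>\<in>set (maxargs \<phi>). tl_over \<Omega> l \<psi> \<longrightarrow> (\<forall>\<rho>. (\<forall>z. \<rho> z \<in> {1..k+1}) \<longrightarrow> good n \<Omega> l k \<psi> \<rho> (\<Phi> \<psi> \<rho>))"
    proof (intro ballI impI allI)
      fix \<psi> and \<rho>' :: "nat \<Rightarrow> nat" assume "\<psi> \<in> set (maxargs \<phi>)" "tl_over \<Omega> l \<psi>" "\<forall>z. \<rho>' z \<in> {1..k+1}"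
      then have "\<exists>e. good n \<Omega> l k \<psi> \<rho>' e" using "1"(2) by blast
      then show "good n \<Omega> l k \<psi> \<rho>' (\<Phi> \<psi> \<rho>')" unfolding \<Phi>_def by (rule someI_ex)
    qed
    define Q where "Q = (\<lambda>(c :: real \<times> nat list \<times> nat list expr) (e :: nat list expr). tl_over \<Omega> l e \<and> vars e \<subseteq> {1..k+1} \<and>
       (\<forall>G I \<nu>. is_graph n G \<longrightarrow> valuation n \<nu> \<longrightarrow> eval n G I \<nu> e = eval n G (Iphi \<phi> n G) (\<nu> \<circ> \<rho>) (sumvars (fst (snd c)) (snd (snd c)))))"
    have exQ: "\<exists>e. Q c e" if c: "c \<in> set cs" for c
    proof -
      obtain a ys \<theta> where ceq: "c = (a, ys, \<theta>)" by (cases c) auto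
      have cj: "is_conj l ys \<theta>" and tw: "conj_tw ys \<theta> \<le> int k" using csok c ceq by auto
      have pr: "is_prod l \<theta>" using cj by (simp add: is_conj_def)
      have aok: "\<forall>a\<in>set (atoms_of \<theta>). factor_ok n \<Omega> l k (vars a) (\<lambda>G \<beta>. eval n G (Iphi \<phi> n G) \<beta> a) (\<lambda>\<eta>. atomF \<phi> \<Phi> \<eta> a)"
        using atom_ok[OF "1"(3) H pr] by blast
      show ?thesis
        using conj_expr[where AF="\<lambda>a \<eta>. atomF \<phi> \<Phi> \<eta> a" and J="\<lambda>G. Iphi \<phi> n G", OF cj tw aok tot]
        unfolding Q_def ceq by simp
    qed
    define E where "E = (\<lambda>c. SOME e. Q c e)"
    have QE: "Q c (E c)" if "c \<in> set cs" for c
      unfolding E_def using exQ[OF that] by (rule someI_ex)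
    define \<phi>' where "\<phi>' = lincomb (map (\<lambda>c. (fst c, E c)) cs)"
    have "good n \<Omega> l k \<phi> \<rho> \<phi>'"
      unfolding good_def
    proof (intro conjI allI impI)
      show "tl_over \<Omega> l \<phi>'" unfolding \<phi>'_def using QE by (intro tl_lincomb) (auto simp: Q_def)
      have "insert 1 (\<Union>(a, e)\<in>set (map (\<lambda>c. (fst c, E c)) cs). vars e) \<subseteq> {1..k+1}"
        using QE by (auto simp: Q_def)
      then show "vars \<phi>' \<subseteq> {1..k+1}" unfolding \<phi>'_def by (rule order_trans[OF vars_lincomb])
      fix G I \<nu> assume gG: "is_graph n G" and v\<nu>: "valuation n \<nu>"
      have v2: "valuation n (\<nu> \<circ> \<rho>)" using v\<nu> by (simp add: valuation_def)
      have "eval n G I \<nu> \<phi>' = sum_list (map (\<lambda>c. fst c * eval n G I \<nu> (E c)) cs)"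
        unfolding \<phi>'_def by (rule eval_lincomb_map)
      also have "\<dots> = sum_list (map (\<lambda>c. fst c * eval n G (Iphi \<phi> n G) (\<nu> \<circ> \<rho>) (sumvars (fst (snd c)) (snd (snd c)))) cs)"
      proof (intro arg_cong[where f = sum_list] map_cong refl)
        fix c assume "c \<in> set cs"
        then have "eval n G I \<nu> (E c) = eval n G (Iphi \<phi> n G) (\<nu> \<circ> \<rho>) (sumvars (fst (snd c)) (snd (snd c)))"
          using QE gG v\<nu> unfolding Q_def by blast
        then show "fst c * eval n G I \<nu> (E c) = fst c * eval n G (Iphi \<phi> n G) (\<nu> \<circ> \<rho>) (sumvars (fst (snd c)) (snd (snd c)))"
          by simp
      qed
      also have "\<dots> = (\<Sum>(a, ys, \<theta>) \<leftarrow> cs. a * eval n G (Iphi \<phi> n G) (\<nu> \<circ> \<rho>) (sumvars ys \<theta>))"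
        by (rule sum_triple[of "\<lambda>ys \<theta>. eval n G (Iphi \<phi> n G) (\<nu> \<circ> \<rho>) (sumvars ys \<theta>)" cs, symmetric])
      also have "\<dots> = eval n G (Iphi \<phi> n G) (\<nu> \<circ> \<rho>) (nofun [] \<phi>)"
      proof -
        have "is_graph n G \<longrightarrow> valuation n (\<nu> \<circ> \<rho>) \<longrightarrow> eval n G (Iphi \<phi> n G) (\<nu> \<circ> \<rho>) (nofun [] \<phi>) = (\<Sum>(a, ys, \<theta>) \<leftarrow> cs. a * eval n G (Iphi \<phi> n G) (\<nu> \<circ> \<rho>) (sumvars ys \<theta>))"
          using eqc by blast
        then show ?thesis using gG v2 by simp
      qed
      also have "\<dots> = eval n G I (\<nu> \<circ> \<rho>) \<phi>"
        by (rule nofun_eval[OF "1"(3)]) (simp add: Iphi_def)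
      finally show "eval n G I \<nu> \<phi>' = eval n G I (\<nu> \<circ> \<rho>) \<phi>" .
    qed
    then show "\<exists>e. good n \<Omega> l k \<phi> \<rho> e" by blast
  qed
qed

theorem proposition2:
  fixes n l k :: nat and \<Omega> :: "(nat \<times> (real list \<Rightarrow> real)) set"
    and \<phi> :: "nat list expr"
  assumes "n \<ge> 1" and "l \<ge> 1"
    and "\<forall>f \<in> \<Omega>. fst f \<ge> 1"
    and "tl_over \<Omega> l \<phi>"
    and "tw_le n l k \<phi>"
    and "free \<phi> \<subseteq> {1..k+1}"
  shows "\<exists>\<phi>' :: nat list expr. tl_over \<Omega> l \<phi>' \<and> vars \<phi>' \<subseteq> {1..k+1} \<and> free \<phi>' \<subseteq> free \<phi> \<and>
           (\<forall>G I \<nu>. is_graph n G \<longrightarrow> valuation n \<nu> \<longrightarrow> eval n G I \<nu> \<phi>' = eval n G I \<nu> \<phi>)"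
proof -
  define \<rho>0 where "\<rho>0 = (\<lambda>z::nat. if z \<in> {1..k+1} then z else 1)"
  have tot: "\<forall>z. \<rho>0 z \<in> {1..k+1}" unfolding \<rho>0_def by auto
  obtain e where ge: "good n \<Omega> l k \<phi> \<rho>0 e" using gen[OF assms(5) assms(4)] tot by blast
  define ts where "ts = sorted_list_of_set ({1..k+1} - free \<phi>)"
  have sts: "set ts = {1..k+1} - free \<phi>" unfolding ts_def by simp
  define e' where "e' = closeE n ts e"
  have te: "tl_over \<Omega> l e" and ve: "vars e \<subseteq> {1..k+1}"
    and ee: "\<And>G I \<nu>. is_graph n G \<Longrightarrow> valuation n \<nu> \<Longrightarrow> eval n G I \<nu> e = eval n G I (\<nu> \<circ> \<rho>0) \<phi>"
    using ge unfolding good_def by blast+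
  have r0: "\<rho>0 z = z" if "z \<in> free \<phi>" for z
    using that assms(6) unfolding \<rho>0_def by auto
  have "tl_over \<Omega> l e'" unfolding e'_def by (rule closeE_props(1)[OF te])
  moreover have "vars e' \<subseteq> {1..k+1}" unfolding e'_def using closeE_props(2)[of n ts e] sts ve by auto
  moreover have "free e' \<subseteq> free \<phi>"
    unfolding e'_def closeE_props(3) sts using free_sub_vars[of e] ve by auto
  moreover have "eval n G I \<nu> e' = eval n G I \<nu> \<phi>" if gG: "is_graph n G" and v\<nu>: "valuation n \<nu>" for G I \<nu>
  proof -
    have "eval n G I \<nu> e' = eval n G I \<nu> e"
      unfolding e'_def
    proof (rule closeE_eval[OF assms(1) _ _ v\<nu>, of _ "free \<phi>"])
      show "set ts \<inter> free \<phi> = {}" using sts by auto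
      fix \<mu> \<mu>' assume "valuation n \<mu>" "valuation n \<mu>'" and ag: "\<forall>z\<in>free \<phi>. \<mu> z = \<mu>' z"
      have "eval n G I \<mu> e = eval n G I (\<mu> \<circ> \<rho>0) \<phi>" using ee gG \<open>valuation n \<mu>\<close> by blast
      also have "\<dots> = eval n G I (\<mu>' \<circ> \<rho>0) \<phi>" using ag r0 by (intro eval_free) (auto simp: r0)
      also have "\<dots> = eval n G I \<mu>' e" using ee gG \<open>valuation n \<mu>'\<close> by simp
      finally show "eval n G I \<mu> e = eval n G I \<mu>' e" .
    qed
    also have "\<dots> = eval n G I (\<nu> \<circ> \<rho>0) \<phi>" using ee gG v\<nu> by blast
    also have "\<dots> = eval n G I \<nu> \<phi>" by (intro eval_free) (auto simp: r0)
    finally show ?thesis .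
  qed
  ultimately show ?thesis by blast
qed

end
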